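(* Let $f,h:\mathbb{R}^d\to\mathbb{R}$ be closed convex, $a,b,\eta>0$, $\delta=\sqrt{2\eta/(d+2)}$, $\widetilde Q=\{(x,s,t):h(x)\le as,\ f(x)+as\le bt\}$. Let $(y,u,v)\in\mathbb{R}^{d+2}$, $q=(y,u,v-b\eta)$, $p_{k-1}\in\widetilde Q$, $r_{\mathrm{loc}}=\|p_{k-1}-q\|$, $\widetilde Q_{\mathrm{loc}}=\widetilde Q\cap\{p:\|p-q\|\le2r_{\mathrm{loc}}\}$, and $\widetilde\Theta(p)=I_{\widetilde Q}(p)+\frac1{2\eta}\|p-q\|^2+bv-\frac{\eta b^2}2$. Let $\tilde p\in\widetilde Q_{\mathrm{loc}}$ satisfy $\widetilde\Theta(\tilde p)-\min_{\widetilde Q_{\mathrm{loc}}}\widetilde\Theta\le\frac1{d+2}$, and define $$\widetilde{\mathcal P}_1(p)=\frac{\|p-\tilde p\|^2+\|\tilde p-q\|^2}{2\eta}-\frac\delta\eta(\|p-\tilde p\|+\|\tilde p-q\|)+bv-\frac{b^2\eta}2-\frac{\delta^2}\eta.$$ Then $\widetilde{\mathcal P}_1(p)\le\widetilde\Theta(p)$ for all $p\in\mathbb{R}^{d+2}$.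
   Context: $I_{\widetilde Q}$ is $0$ on $\widetilde Q$ and $+\infty$ off it. *)

theory Defs
  imports "HOL-Analysis.Analysis"
begin

definition closed_fun :: "('a::topological_space \<Rightarrow> real) \<Rightarrow> bool" where
  "closed_fun f \<longleftrightarrow> closed {(x, y). f x \<le> y}"

definition ind_fun :: "'a set \<Rightarrow> 'a \<Rightarrow> ereal" where
  "ind_fun S p = (if p \<in> S then 0 else \<infinity>)"

definition Qtil :: "('a \<Rightarrow> real) \<Rightarrow> ('a \<Rightarrow> real) \<Rightarrow> real \<Rightarrow> real \<Rightarrow> ('a \<times> real \<times> real) set" where
  "Qtil f h a b = {(x, s, t). h x \<le> a * s \<and> f x + a * s \<le> b * t}"

end

theory Submission
  imports Defs
begin

lemma key_ineq:
  fixes pt p q :: "'a::real_inner" and Q :: "'a set"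
  assumes cQ: "convex Q" and ptQ: "pt \<in> Q" and pQ: "p \<in> Q" and R: "norm (pt - q) \<le> R"
    and D: "D \<ge> 0"
    and opt: "\<And>z. z \<in> Q \<Longrightarrow> norm (z - q) \<le> R \<Longrightarrow> norm (z - q)^2 \<ge> norm (pt - q)^2 - D"
  shows "inner (pt - q) (p - pt) \<ge> - sqrt D * norm (p - pt) - D"
proof (rule ccontr)
  define g where "g = inner (pt - q) (p - pt)"
  define A where "A = norm (p - pt)"
  define B where "B = norm (pt - q)"
  assume "\<not> ?thesis"
  hence gl: "g < - sqrt D * A - D" by (simp add: g_def A_def)
  have sD: "sqrt D \<ge> 0" "sqrt D ^ 2 = D" using D by auto
  have A0: "A \<ge> 0" by (simp add: A_def)
  have sA: "sqrt D * A \<ge> 0" using sD A0 by simp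
  have g0: "g < 0" using gl sA D by linarith
  have Apos: "A > 0"
  proof (rule ccontr)
    assume "\<not> A > 0" hence "p - pt = 0" using A0 by (simp add: A_def)
    thus False using g0 by (simp add: g_def)
  qed
  define t where "t = min 1 (-g / A^2)"
  have t0: "t \<ge> 0" "t \<le> 1" using g0 Apos by (auto simp: t_def divide_nonpos_pos)
  have tle: "t \<le> -g / A^2" by (simp add: t_def)
  hence tA: "t * A^2 \<le> -g" using Apos by (simp add: field_simps)
  define z where "z = (1 - t) *\<^sub>R pt + t *\<^sub>R p"
  have zQ: "z \<in> Q" unfolding z_def using cQ ptQ pQ t0 by (simp add: convex_alt)
  have zq: "z - q = (pt - q) + t *\<^sub>R (p - pt)" by (simp add: z_def algebra_simps)
  have nz: "norm (z - q)^2 = B^2 + 2 * t * g + t^2 * A^2"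
    unfolding zq power2_norm_eq_inner B_def A_def g_def
    by (simp add: inner_add_left inner_add_right inner_commute power2_eq_square algebra_simps)
  have "t^2 * A^2 \<le> - t * g" using tA t0 mult_left_mono[OF tA t0(1)] by (simp add: power2_eq_square algebra_simps)
  moreover have "t * g \<le> 0" using t0 g0 by (simp add: mult_nonneg_nonpos)
  ultimately have "norm (z - q)^2 \<le> B^2" using nz by linarith
  hence "norm (z - q) \<le> B" using B_def by (metis norm_ge_zero power2_le_imp_le)
  hence "norm (z - q) \<le> R" using R B_def by simp
  from opt[OF zQ this] nz have ineq: "2 * t * g + t^2 * A^2 \<ge> - D" by (simp add: B_def)
  show False
  proof (cases "-g / A^2 \<le> 1")
    case True
    hence "t = -g / A^2" by (simp add: t_def)
    with ineq Apos have "2 * (-g/A^2) * g + g^2/A^2 \<ge> -D" by (simp add: power2_eq_square field_simps)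
    hence "-(g^2)/A^2 \<ge> -D" by (simp add: power2_eq_square field_simps)
    hence "g^2 \<le> D * A^2" using Apos by (simp add: field_simps)
    hence "g^2 \<le> (sqrt D * A)^2" using sD by (simp add: power_mult_distrib)
    hence "\<bar>g\<bar> \<le> \<bar>sqrt D * A\<bar>" by (simp only: abs_le_square_iff)
    hence "\<bar>g\<bar> \<le> sqrt D * A" using sA by simp
    thus False using gl D by linarith
  next
    case False
    hence "t = 1" by (simp add: t_def)
    with ineq tA have "g \<ge> -D" by simp
    thus False using gl sA by linarith
  qed
qed

lemma convex_Qtil:
  fixes f h :: "'a::real_vector \<Rightarrow> real"
  assumes cf: "convex_on UNIV f" and ch: "convex_on UNIV h"
  shows "convex (Qtil f h a b)"
proof (rule convexI)
  fix p p' :: "'a \<times> real \<times> real" and m n :: real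
  assume pQ: "p \<in> Qtil f h a b" and pQ': "p' \<in> Qtil f h a b" and mn: "0 \<le> m" "0 \<le> n" "m + n = 1"
  obtain x s t where p: "p = (x, s, t)" by (cases p) auto
  obtain x' s' t' where p': "p' = (x', s', t')" by (cases p') auto
  have h1: "h x \<le> a * s" "f x + a * s \<le> b * t" "h x' \<le> a * s'" "f x' + a * s' \<le> b * t'"
    using pQ pQ' by (auto simp: p p' Qtil_def)
  have m: "m = 1 - n" using mn by simp
  have hc: "h (m *\<^sub>R x + n *\<^sub>R x') \<le> m * h x + n * h x'"
    using convex_onD[OF ch, of n x x'] mn unfolding m by simp
  have fc: "f (m *\<^sub>R x + n *\<^sub>R x') \<le> m * f x + n * f x'"
    using convex_onD[OF cf, of n x x'] mn unfolding m by simp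
  have "m * h x + n * h x' \<le> m * (a * s) + n * (a * s')"
    using mn h1 by (intro add_mono mult_left_mono) auto
  moreover have "m * (f x + a * s) + n * (f x' + a * s') \<le> m * (b * t) + n * (b * t')"
    using mn h1 by (intro add_mono mult_left_mono) auto
  ultimately show "m *\<^sub>R p + n *\<^sub>R p' \<in> Qtil f h a b"
    using hc fc by (simp add: p p' Qtil_def algebra_simps)
qed

theorem lemma23:
  fixes f h :: "real ^ 'd \<Rightarrow> real"
    and a b \<eta> :: real
    and y :: "real ^ 'd" and u v :: real
    and pk ptil :: "(real ^ 'd) \<times> real \<times> real"
  assumes "convex_on UNIV f" "closed_fun f"
    and "convex_on UNIV h" "closed_fun h"
    and "a > 0" "b > 0" "\<eta> > 0"
    and "pk \<in> Qtil f h a b"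
    and "ptil \<in> Qtil f h a b \<inter> {p. norm (p - (y, u, v - b * \<eta>)) \<le> 2 * norm (pk - (y, u, v - b * \<eta>))}"
    and "(\<lambda>p. ind_fun (Qtil f h a b) p + ereal (norm (p - (y, u, v - b * \<eta>))^2 / (2 * \<eta>) + b * v - \<eta> * b^2 / 2)) ptil
         - (INF p \<in> Qtil f h a b \<inter> {p. norm (p - (y, u, v - b * \<eta>)) \<le> 2 * norm (pk - (y, u, v - b * \<eta>))}.
              ind_fun (Qtil f h a b) p + ereal (norm (p - (y, u, v - b * \<eta>))^2 / (2 * \<eta>) + b * v - \<eta> * b^2 / 2))
         \<le> ereal (1 / (real CARD('d) + 2))"
  shows "\<forall>p :: (real ^ 'd) \<times> real \<times> real.
           ereal ((norm (p - ptil)^2 + norm (ptil - (y, u, v - b * \<eta>))^2) / (2 * \<eta>)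
                  - sqrt (2 * \<eta> / (real CARD('d) + 2)) / \<eta> * (norm (p - ptil) + norm (ptil - (y, u, v - b * \<eta>)))
                  + b * v - b^2 * \<eta> / 2 - (sqrt (2 * \<eta> / (real CARD('d) + 2)))^2 / \<eta>)
           \<le> ind_fun (Qtil f h a b) p + ereal (norm (p - (y, u, v - b * \<eta>))^2 / (2 * \<eta>) + b * v - \<eta> * b^2 / 2)"
proof
  fix p :: "(real ^ 'd) \<times> real \<times> real"
  define q where "q = (y, u, v - b * \<eta>)"
  define Qs where "Qs = Qtil f h a b"
  define R where "R = 2 * norm (pk - q)"
  define D where "D = 2 * \<eta> / (real CARD('d) + 2)"
  define c where "c = b * v - \<eta> * b^2 / 2"
  have D0: "D \<ge> 0" using assms(7) by (simp add: D_def)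
  have cQ: "convex Qs" unfolding Qs_def using convex_Qtil[OF assms(1) assms(3)] .
  have ptQ: "ptil \<in> Qs" and ptR: "norm (ptil - q) \<le> R"
    using assms(9) by (auto simp: Qs_def q_def R_def)
  have opt: "norm (z - q)^2 \<ge> norm (ptil - q)^2 - D" if zQ: "z \<in> Qs" and zR: "norm (z - q) \<le> R" for z
  proof -
    let ?Th = "\<lambda>p. ind_fun Qs p + ereal (norm (p - q)^2 / (2 * \<eta>) + b * v - \<eta> * b^2 / 2)"
    let ?K = "Qs \<inter> {p. norm (p - q) \<le> R}"
    have A: "?Th ptil - (INF p \<in> ?K. ?Th p) \<le> ereal (1 / (real CARD('d) + 2))"
      using assms(10) by (simp add: Qs_def q_def R_def c_def)
    have "(INF p \<in> ?K. ?Th p) \<le> ?Th z" using zQ zR by (intro INF_lower) auto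
    hence "?Th ptil - ?Th z \<le> ?Th ptil - (INF p \<in> ?K. ?Th p)" by (intro ereal_minus_mono) auto
    from this A have "?Th ptil - ?Th z \<le> ereal (1 / (real CARD('d) + 2))" by (rule order_trans)
    hence "norm (ptil - q)^2 / (2 * \<eta>) + b * v - \<eta> * b^2 / 2 - (norm (z - q)^2 / (2 * \<eta>) + b * v - \<eta> * b^2 / 2) \<le> 1 / (real CARD('d) + 2)"
      using zQ ptQ by (simp add: ind_fun_def)
    hence "norm (ptil - q)^2 / (2 * \<eta>) - norm (z - q)^2 / (2 * \<eta>) \<le> 1 / (real CARD('d) + 2)" by simp
    hence "(norm (ptil - q)^2 - norm (z - q)^2) / (2 * \<eta>) \<le> 1 / (real CARD('d) + 2)"
      by (simp add: diff_divide_distrib)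
    hence "norm (ptil - q)^2 - norm (z - q)^2 \<le> 2 * \<eta> * (1 / (real CARD('d) + 2))"
      using assms(7) by (simp add: divide_le_eq mult.commute)
    thus ?thesis by (simp add: D_def)
  qed
  show "ereal ((norm (p - ptil)^2 + norm (ptil - (y, u, v - b * \<eta>))^2) / (2 * \<eta>)
                  - sqrt (2 * \<eta> / (real CARD('d) + 2)) / \<eta> * (norm (p - ptil) + norm (ptil - (y, u, v - b * \<eta>)))
                  + b * v - b^2 * \<eta> / 2 - (sqrt (2 * \<eta> / (real CARD('d) + 2)))^2 / \<eta>)
           \<le> ind_fun (Qtil f h a b) p + ereal (norm (p - (y, u, v - b * \<eta>))^2 / (2 * \<eta>) + b * v - \<eta> * b^2 / 2)"
  proof (cases "p \<in> Qs")
    case False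
    thus ?thesis by (simp add: ind_fun_def Qs_def)
  next
    case True
    define A where "A = norm (p - ptil)"
    define B where "B = norm (ptil - q)"
    define g where "g = inner (ptil - q) (p - ptil)"
    have gk: "g \<ge> - sqrt D * A - D"
      using key_ineq[OF cQ ptQ True ptR D0 opt] by (simp add: g_def A_def)
    have sD: "sqrt D \<ge> 0" "sqrt D ^ 2 = D" using D0 by auto
    have B0: "B \<ge> 0" by (simp add: B_def)
    have Cq: "norm (p - q)^2 = A^2 + B^2 + 2 * g"
    proof -
      have "inner (p - ptil) (ptil - q) = (norm (p - q)^2 - A^2 - B^2) / 2"
        using dot_norm[of "p - ptil" "ptil - q"] by (simp add: A_def B_def)
      hence "g = (norm (p - q)^2 - A^2 - B^2) / 2" by (simp add: g_def inner_commute)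
      thus ?thesis by simp
    qed
    have sB: "sqrt D * B \<ge> 0" using sD B0 by simp
    have dist: "2 * sqrt D * (A + B) = 2 * (sqrt D * A) + 2 * (sqrt D * B)"
      by (simp add: algebra_simps)
    have main: "A^2 + B^2 - 2 * sqrt D * (A + B) - 2 * D \<le> norm (p - q)^2"
      unfolding Cq dist using gk sB by linarith
    have "(A^2 + B^2) / (2 * \<eta>) - sqrt D / \<eta> * (A + B) - (sqrt D)^2 / \<eta>
          = (A^2 + B^2 - 2 * sqrt D * (A + B) - 2 * D) / (2 * \<eta>)"
      using assms(7) sD by (simp add: field_simps)
    also have "\<dots> \<le> norm (p - q)^2 / (2 * \<eta>)"
      using main assms(7) by (intro divide_right_mono) auto
    finally have fin: "(A^2 + B^2) / (2 * \<eta>) - sqrt D / \<eta> * (A + B) - (sqrt D)^2 / \<eta>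
       \<le> norm (p - q)^2 / (2 * \<eta>)" .
    have bb: "b^2 * \<eta> = \<eta> * b^2" by simp
    have XY: "(A^2 + B^2) / (2 * \<eta>) - sqrt D / \<eta> * (A + B) + b * v - b^2 * \<eta> / 2 - (sqrt D)^2 / \<eta>
       \<le> norm (p - q)^2 / (2 * \<eta>) + b * v - \<eta> * b^2 / 2"
      using fin unfolding bb by linarith
    have ind0: "ind_fun (Qtil f h a b) p = 0" using True by (simp add: ind_fun_def Qs_def)
    show ?thesis unfolding ind0 using XY[unfolded A_def B_def D_def q_def] by simp
  qed
qed

end
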